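(* Let $I_1,\dots,I_s$ be squarefree monomial ideals in $S=\mathbb{K}[x_1,\dots,x_n]$, $\mathbb{K}$ a field. Then (a) $\operatorname{sreg}(S/\sum_{i=1}^s I_i)\le\sum_{i=1}^s\operatorname{sreg}(S/I_i)$, and (b) $\operatorname{sreg}(\bigcap_{i=1}^s I_i)\le\sum_{i=1}^s\operatorname{sreg}(I_i)$.
   Context: Stanley regularity: for a finitely generated squarefree $\mathbb{Z}^n$-graded $S$-module $M$ (such as $S/I$ or $I$ for a squarefree monomial ideal $I$), a squarefree Stanley decomposition of $M$ is a decomposition $M=\bigoplus_{i=1}^r u_i\mathbb{K}[Z_i]$ as $\mathbb{K}$-vector spaces, where $Z_i\subseteq\{x_1,\dots,x_n\}$, each $u_i$ is a homogeneous element of squarefree degree with support contained in $Z_i$, and each $u_i\mathbb{K}[Z_i]$ (the $\mathbb{K}$-span of $u_iv$, $v$ a monomial of $\mathbb{K}[Z_i]$) is free over $\mathbb{K}[Z_i]$. Its Stanley regularity is $\max_i\deg(u_i)$, and $\operatorname{sreg}(M)$ is the minimum of this over all such decompositions. *)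

theory Defs
  imports Main
begin

text \<open>Monomials of S = K[x_0,...,x_(n-1)] are represented by exponent vectors.
A monomial ideal is represented by the set of monomials it contains (it is
the K-span of these); a Z^n-graded module M in {S/I, I} is represented by its
monomial K-basis (the standard monomials for S/I, the monomials of I for I).\<close>

type_synonym mono = "nat \<Rightarrow> nat"

definition smonos :: "nat \<Rightarrow> mono set" where
  "smonos n = {a. \<forall>i. n \<le> i \<longrightarrow> a i = 0}"

definition sqfree :: "mono \<Rightarrow> bool" where
  "sqfree a \<longleftrightarrow> (\<forall>i. a i \<le> 1)"

definition mdeg :: "nat \<Rightarrow> mono \<Rightarrow> nat" where
  "mdeg n a = (\<Sum>i<n. a i)"

definition sqfree_monomial_ideal :: "nat \<Rightarrow> mono set \<Rightarrow> bool" where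
  "sqfree_monomial_ideal n I \<longleftrightarrow>
     I \<subseteq> smonos n \<and>
     (\<forall>a\<in>I. \<forall>b\<in>smonos n. (\<lambda>i. a i + b i) \<in> I) \<and>
     (\<forall>a\<in>I. \<exists>g\<in>I. sqfree g \<and> (\<forall>i. g i \<le> a i))"

definition cone :: "mono \<Rightarrow> nat set \<Rightarrow> mono set" where
  "cone u Z = {(\<lambda>i. u i + v i) | v. \<forall>i. i \<notin> Z \<longrightarrow> v i = 0}"

text \<open>Squarefree Stanley decomposition of the module with monomial basis B:
summands u K[Z] with u a squarefree monomial, supp u \<subseteq> Z, u K[Z] free
(i.e. all u v, v in K[Z], are nonzero in M, i.e. lie in B), and M the direct sum.\<close>
definition stanley_decomp :: "nat \<Rightarrow> mono set \<Rightarrow> (mono \<times> nat set) set \<Rightarrow> bool" where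
  "stanley_decomp n B D \<longleftrightarrow>
     finite D \<and>
     (\<forall>(u, Z)\<in>D. u \<in> smonos n \<and> sqfree u \<and> Z \<subseteq> {..<n} \<and>
                  {i. u i \<noteq> 0} \<subseteq> Z \<and> cone u Z \<subseteq> B) \<and>
     (\<forall>p\<in>D. \<forall>q\<in>D. p \<noteq> q \<longrightarrow> cone (fst p) (snd p) \<inter> cone (fst q) (snd q) = {}) \<and>
     (\<Union>(u, Z)\<in>D. cone u Z) = B"

definition sreg :: "nat \<Rightarrow> mono set \<Rightarrow> nat" where
  "sreg n B = Inf {d. \<exists>D. stanley_decomp n B D \<and> (\<forall>(u, Z)\<in>D. mdeg n u \<le> d)}"

end

theory Submission
  imports Defs
begin

lemma cone_char:
  assumes "{i. u i \<noteq> 0} \<subseteq> Z"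
  shows "m \<in> cone u Z \<longleftrightarrow> (\<forall>i. u i \<le> m i) \<and> (\<forall>i. i \<notin> Z \<longrightarrow> m i = 0)"
proof
  assume "m \<in> cone u Z"
  then obtain v where m: "m = (\<lambda>i. u i + v i)" and v: "\<forall>i. i \<notin> Z \<longrightarrow> v i = 0"
    unfolding cone_def by blast
  show "(\<forall>i. u i \<le> m i) \<and> (\<forall>i. i \<notin> Z \<longrightarrow> m i = 0)"
    using m v assms by auto
next
  assume h: "(\<forall>i. u i \<le> m i) \<and> (\<forall>i. i \<notin> Z \<longrightarrow> m i = 0)"
  have "\<exists>v. m = (\<lambda>i. u i + v i) \<and> (\<forall>i. i \<notin> Z \<longrightarrow> v i = 0)"
    using h by (intro exI[of _ "\<lambda>i. m i - u i"]) auto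
  then show "m \<in> cone u Z" unfolding cone_def by simp
qed

definition good :: "nat \<Rightarrow> mono set \<Rightarrow> nat \<Rightarrow> bool" where
  "good n B d \<longleftrightarrow> (\<exists>D. stanley_decomp n B D \<and> (\<forall>(u, Z)\<in>D. mdeg n u \<le> d))"

lemma mdeg_max: "mdeg n (\<lambda>i. max (a i) (b i)) \<le> mdeg n a + mdeg n b"
  unfolding mdeg_def
  by (simp add: sum.distrib[symmetric] sum_mono)

lemma good_inter:
  assumes "good n B1 d1" "good n B2 d2"
  shows "good n (B1 \<inter> B2) (d1 + d2)"
proof -
  obtain D1 where D1: "stanley_decomp n B1 D1" "\<forall>(u, Z)\<in>D1. mdeg n u \<le> d1"
    using assms(1) unfolding good_def by blast
  obtain D2 where D2: "stanley_decomp n B2 D2" "\<forall>(u, Z)\<in>D2. mdeg n u \<le> d2"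
    using assms(2) unfolding good_def by blast
  define f where "f = (\<lambda>(p::mono \<times> nat set, q::mono \<times> nat set).
      ((\<lambda>i. max (fst p i) (fst q i)), snd p \<inter> snd q))"
  define P where "P = {(p, q). p \<in> D1 \<and> q \<in> D2 \<and>
      {i. fst p i \<noteq> 0 \<or> fst q i \<noteq> 0} \<subseteq> snd p \<inter> snd q}"
  define D where "D = f ` P"
  have fin1: "finite D1" and fin2: "finite D2" using D1 D2 unfolding stanley_decomp_def by auto
  have P1: "\<And>u Z. (u, Z) \<in> D1 \<Longrightarrow> u \<in> smonos n \<and> sqfree u \<and> Z \<subseteq> {..<n} \<and>
                  {i. u i \<noteq> 0} \<subseteq> Z \<and> cone u Z \<subseteq> B1"
    using D1(1) unfolding stanley_decomp_def by blast
  have P2: "\<And>u Z. (u, Z) \<in> D2 \<Longrightarrow> u \<in> smonos n \<and> sqfree u \<and> Z \<subseteq> {..<n} \<and>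
                  {i. u i \<noteq> 0} \<subseteq> Z \<and> cone u Z \<subseteq> B2"
    using D2(1) unfolding stanley_decomp_def by blast
  have dj1: "\<And>p q. p \<in> D1 \<Longrightarrow> q \<in> D1 \<Longrightarrow> p \<noteq> q \<Longrightarrow> cone (fst p) (snd p) \<inter> cone (fst q) (snd q) = {}"
    using D1(1) unfolding stanley_decomp_def by blast
  have dj2: "\<And>p q. p \<in> D2 \<Longrightarrow> q \<in> D2 \<Longrightarrow> p \<noteq> q \<Longrightarrow> cone (fst p) (snd p) \<inter> cone (fst q) (snd q) = {}"
    using D2(1) unfolding stanley_decomp_def by blast
  have U1: "(\<Union>(u, Z)\<in>D1. cone u Z) = B1" using D1(1) unfolding stanley_decomp_def by blast
  have U2: "(\<Union>(u, Z)\<in>D2. cone u Z) = B2" using D2(1) unfolding stanley_decomp_def by blast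
  have sub: "\<And>u1 Z1 u2 Z2 m. (u1, Z1) \<in> D1 \<Longrightarrow> (u2, Z2) \<in> D2 \<Longrightarrow>
      {i. u1 i \<noteq> 0 \<or> u2 i \<noteq> 0} \<subseteq> Z1 \<inter> Z2 \<Longrightarrow>
      m \<in> cone (\<lambda>i. max (u1 i) (u2 i)) (Z1 \<inter> Z2) \<Longrightarrow> m \<in> cone u1 Z1 \<and> m \<in> cone u2 Z2"
  proof -
    fix u1 Z1 u2 Z2 m
    assume a: "(u1, Z1) \<in> D1" "(u2, Z2) \<in> D2" "{i. u1 i \<noteq> 0 \<or> u2 i \<noteq> 0} \<subseteq> Z1 \<inter> Z2"
      "m \<in> cone (\<lambda>i. max (u1 i) (u2 i)) (Z1 \<inter> Z2)"
    have s: "{i. max (u1 i) (u2 i) \<noteq> 0} \<subseteq> Z1 \<inter> Z2" using a(3) by auto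
    have "(\<forall>i. max (u1 i) (u2 i) \<le> m i) \<and> (\<forall>i. i \<notin> Z1 \<inter> Z2 \<longrightarrow> m i = 0)"
      using cone_char[OF s] a(4) by blast
    then show "m \<in> cone u1 Z1 \<and> m \<in> cone u2 Z2"
      using cone_char[of u1 Z1 m] cone_char[of u2 Z2 m] P1[OF a(1)] P2[OF a(2)] by auto
  qed
  have Dcases: "\<And>x. x \<in> D \<Longrightarrow> \<exists>u1 Z1 u2 Z2. x = ((\<lambda>i. max (u1 i) (u2 i)), Z1 \<inter> Z2) \<and>
      (u1, Z1) \<in> D1 \<and> (u2, Z2) \<in> D2 \<and> {i. u1 i \<noteq> 0 \<or> u2 i \<noteq> 0} \<subseteq> Z1 \<inter> Z2"
  proof -
    fix x assume "x \<in> D"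
    then obtain pq where pq: "pq \<in> P" "x = f pq" unfolding D_def by blast
    obtain u1 Z1 u2 Z2 where e: "pq = ((u1, Z1), (u2, Z2))" by (cases pq) auto
    show "?thesis x" using pq unfolding e P_def f_def by auto
  qed
  have sd: "stanley_decomp n (B1 \<inter> B2) D"
    unfolding stanley_decomp_def
  proof (intro conjI)
    have "P \<subseteq> D1 \<times> D2" unfolding P_def by auto
    then have "finite P" using fin1 fin2 finite_subset by blast
    then show "finite D" unfolding D_def by simp
  next
    show "\<forall>(u, Z)\<in>D. u \<in> smonos n \<and> sqfree u \<and> Z \<subseteq> {..<n} \<and> {i. u i \<noteq> 0} \<subseteq> Z \<and> cone u Z \<subseteq> B1 \<inter> B2"
    proof clarify
      fix u Z assume "(u, Z) \<in> D"
      then obtain u1 Z1 u2 Z2 where x: "u = (\<lambda>i. max (u1 i) (u2 i))" "Z = Z1 \<inter> Z2"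
        and a: "(u1, Z1) \<in> D1" "(u2, Z2) \<in> D2" "{i. u1 i \<noteq> 0 \<or> u2 i \<noteq> 0} \<subseteq> Z1 \<inter> Z2"
        using Dcases by blast
      have "cone u Z \<subseteq> B1 \<inter> B2" unfolding x using sub[OF a] P1[OF a(1)] P2[OF a(2)] by blast
      moreover have "u \<in> smonos n \<and> sqfree u \<and> Z \<subseteq> {..<n} \<and> {i. u i \<noteq> 0} \<subseteq> Z"
        using P1[OF a(1)] P2[OF a(2)] a(3) unfolding x smonos_def sqfree_def by auto
      ultimately show "u \<in> smonos n \<and> sqfree u \<and> Z \<subseteq> {..<n} \<and> {i. u i \<noteq> 0} \<subseteq> Z \<and> cone u Z \<subseteq> B1 \<inter> B2"
        by blast
    qed
  next
    show "\<forall>p\<in>D. \<forall>q\<in>D. p \<noteq> q \<longrightarrow> cone (fst p) (snd p) \<inter> cone (fst q) (snd q) = {}"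
    proof (intro ballI impI)
      fix p q assume pq: "p \<in> D" "q \<in> D" "p \<noteq> q"
      obtain a1 A1 a2 A2 where xp: "p = ((\<lambda>i. max (a1 i) (a2 i)), A1 \<inter> A2)"
        and h1: "(a1, A1) \<in> D1" "(a2, A2) \<in> D2" "{i. a1 i \<noteq> 0 \<or> a2 i \<noteq> 0} \<subseteq> A1 \<inter> A2"
        using Dcases[OF pq(1)] by blast
      obtain b1 B1' b2 B2' where xq: "q = ((\<lambda>i. max (b1 i) (b2 i)), B1' \<inter> B2')"
        and h2: "(b1, B1') \<in> D1" "(b2, B2') \<in> D2" "{i. b1 i \<noteq> 0 \<or> b2 i \<noteq> 0} \<subseteq> B1' \<inter> B2'"
        using Dcases[OF pq(2)] by blast
      show "cone (fst p) (snd p) \<inter> cone (fst q) (snd q) = {}"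
      proof (rule ccontr)
        assume "cone (fst p) (snd p) \<inter> cone (fst q) (snd q) \<noteq> {}"
        then obtain m where m: "m \<in> cone (\<lambda>i. max (a1 i) (a2 i)) (A1 \<inter> A2)"
          "m \<in> cone (\<lambda>i. max (b1 i) (b2 i)) (B1' \<inter> B2')" unfolding xp xq by auto
        have m1: "m \<in> cone a1 A1 \<and> m \<in> cone a2 A2" using sub[OF h1 m(1)] .
        have m2: "m \<in> cone b1 B1' \<and> m \<in> cone b2 B2'" using sub[OF h2 m(2)] .
        have "(a1, A1) = (b1, B1')" using dj1[OF h1(1) h2(1)] m1 m2 by auto
        moreover have "(a2, A2) = (b2, B2')" using dj2[OF h1(2) h2(2)] m1 m2 by auto
        ultimately show False using pq(3) xp xq by auto
      qed
    qed
  next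
    show "(\<Union>(u, Z)\<in>D. cone u Z) = B1 \<inter> B2"
    proof
      show "(\<Union>(u, Z)\<in>D. cone u Z) \<subseteq> B1 \<inter> B2"
      proof
        fix m assume "m \<in> (\<Union>(u, Z)\<in>D. cone u Z)"
        then obtain u Z where uZ: "(u, Z) \<in> D" "m \<in> cone u Z" by auto
        then obtain u1 Z1 u2 Z2 where x: "u = (\<lambda>i. max (u1 i) (u2 i))" "Z = Z1 \<inter> Z2"
          and a: "(u1, Z1) \<in> D1" "(u2, Z2) \<in> D2" "{i. u1 i \<noteq> 0 \<or> u2 i \<noteq> 0} \<subseteq> Z1 \<inter> Z2"
          using Dcases by blast
        have "m \<in> cone (\<lambda>i. max (u1 i) (u2 i)) (Z1 \<inter> Z2)" using uZ(2) x by simp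
        then show "m \<in> B1 \<inter> B2" using sub[OF a] P1[OF a(1)] P2[OF a(2)] by auto
      qed
    next
      show "B1 \<inter> B2 \<subseteq> (\<Union>(u, Z)\<in>D. cone u Z)"
      proof
        fix m assume m: "m \<in> B1 \<inter> B2"
        have "m \<in> (\<Union>(u, Z)\<in>D1. cone u Z)" using m U1 by simp
        then obtain u1 Z1 where a1: "(u1, Z1) \<in> D1" "m \<in> cone u1 Z1" by auto
        have "m \<in> (\<Union>(u, Z)\<in>D2. cone u Z)" using m U2 by simp
        then obtain u2 Z2 where a2: "(u2, Z2) \<in> D2" "m \<in> cone u2 Z2" by auto
        have s1: "{i. u1 i \<noteq> 0} \<subseteq> Z1" using P1[OF a1(1)] by simp
        have s2: "{i. u2 i \<noteq> 0} \<subseteq> Z2" using P2[OF a2(1)] by simp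
        have c1: "(\<forall>i. u1 i \<le> m i) \<and> (\<forall>i. i \<notin> Z1 \<longrightarrow> m i = 0)"
          by (rule iffD1[OF cone_char[OF s1] a1(2)])
        have c2: "(\<forall>i. u2 i \<le> m i) \<and> (\<forall>i. i \<notin> Z2 \<longrightarrow> m i = 0)"
          by (rule iffD1[OF cone_char[OF s2] a2(2)])
        have s3: "{i. u1 i \<noteq> 0 \<or> u2 i \<noteq> 0} \<subseteq> Z1 \<inter> Z2"
        proof
          fix i assume i: "i \<in> {i. u1 i \<noteq> 0 \<or> u2 i \<noteq> 0}"
          have "u1 i \<le> m i" "u2 i \<le> m i" using c1 c2 by blast+
          then have "m i \<noteq> 0" using i by auto
          then show "i \<in> Z1 \<inter> Z2" using c1 c2 by auto
        qed
        have s: "{i. max (u1 i) (u2 i) \<noteq> 0} \<subseteq> Z1 \<inter> Z2" using s3 by auto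
        have "m \<in> cone (\<lambda>i. max (u1 i) (u2 i)) (Z1 \<inter> Z2)"
          using cone_char[OF s] c1 c2 by auto
        moreover have "((u1, Z1), (u2, Z2)) \<in> P" using a1 a2 s3 unfolding P_def by auto
        then have "f ((u1, Z1), (u2, Z2)) \<in> D" unfolding D_def by blast
        moreover have "f ((u1, Z1), (u2, Z2)) = ((\<lambda>i. max (u1 i) (u2 i)), Z1 \<inter> Z2)"
          unfolding f_def by simp
        ultimately show "m \<in> (\<Union>(u, Z)\<in>D. cone u Z)" by force
      qed
    qed
  qed
  have "\<forall>(u, Z)\<in>D. mdeg n u \<le> d1 + d2"
  proof clarify
    fix u Z assume "(u, Z) \<in> D"
    then obtain u1 Z1 u2 Z2 where x: "u = (\<lambda>i. max (u1 i) (u2 i))"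
      and a: "(u1, Z1) \<in> D1" "(u2, Z2) \<in> D2"
      using Dcases by blast
    have "mdeg n u1 \<le> d1" "mdeg n u2 \<le> d2" using D1(2) D2(2) a by auto
    then show "mdeg n u \<le> d1 + d2" using mdeg_max[of n u1 u2] unfolding x by linarith
  qed
  then show ?thesis using sd unfolding good_def by blast
qed

lemma good_base: "good n (smonos n) 0"
proof -
  have c: "cone (\<lambda>_. 0) {..<n} = smonos n"
    using cone_char[of "\<lambda>_. 0" "{..<n}"] unfolding smonos_def by auto
  have "stanley_decomp n (smonos n) {((\<lambda>_. 0), {..<n})}"
    unfolding stanley_decomp_def using c by (auto simp: smonos_def sqfree_def)
  moreover have "mdeg n (\<lambda>_. 0) \<le> 0" by (simp add: mdeg_def)
  ultimately show ?thesis unfolding good_def by auto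
qed

lemma good_family:
  fixes s :: nat and B :: "nat \<Rightarrow> mono set" and d :: "nat \<Rightarrow> nat"
  assumes "\<forall>i<s. good n (B i) (d i)"
  shows "good n (smonos n \<inter> (\<Inter>i<s. B i)) (\<Sum>i<s. d i)"
  using assms
proof (induction s)
  case 0
  then show ?case using good_base by simp
next
  case (Suc s)
  have "good n ((smonos n \<inter> (\<Inter>i<s. B i)) \<inter> B s) ((\<Sum>i<s. d i) + d s)"
    using good_inter[of n "smonos n \<inter> (\<Inter>i<s. B i)" "\<Sum>i<s. d i" "B s" "d s"] Suc.IH Suc.prems by simp
  moreover have "(smonos n \<inter> (\<Inter>i<s. B i)) \<inter> B s = smonos n \<inter> (\<Inter>i<Suc s. B i)"
    by (auto simp: lessThan_Suc)
  ultimately show ?case by simp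
qed

definition xF :: "nat set \<Rightarrow> mono" where "xF F = (\<lambda>i. if i \<in> F then 1 else 0)"

lemma xF_smonos: "m \<in> smonos n \<Longrightarrow> xF {i. m i \<noteq> 0} \<in> smonos n"
  unfolding smonos_def xF_def by auto

lemma ideal_add:
  assumes "sqfree_monomial_ideal n I" "a \<in> I" "b \<in> smonos n"
  shows "(\<lambda>i. a i + b i) \<in> I"
  using assms unfolding sqfree_monomial_ideal_def by blast

lemma ideal_gen:
  assumes "sqfree_monomial_ideal n I" "a \<in> I"
  shows "\<exists>g\<in>I. sqfree g \<and> (\<forall>i. g i \<le> a i)"
  using assms unfolding sqfree_monomial_ideal_def by blast

lemma key:
  assumes I: "sqfree_monomial_ideal n I" and m: "m \<in> smonos n"
  shows "m \<in> I \<longleftrightarrow> xF {i. m i \<noteq> 0} \<in> I"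
proof
  assume "m \<in> I"
  then obtain g where g: "g \<in> I" "sqfree g" "\<forall>i. g i \<le> m i"
    using ideal_gen[OF I] by blast
  have le: "g i \<le> xF {i. m i \<noteq> 0} i" for i
  proof (cases "m i = 0")
    case True
    have "g i \<le> m i" using g(3) by blast
    then show ?thesis using True by simp
  next
    case False then show ?thesis using g(2) unfolding sqfree_def xF_def by simp
  qed
  have "(\<lambda>i. xF {i. m i \<noteq> 0} i - g i) \<in> smonos n"
    unfolding smonos_def
  proof (intro CollectI allI impI)
    fix i assume "n \<le> i"
    then have "m i = 0" using m unfolding smonos_def by blast
    then show "xF {i. m i \<noteq> 0} i - g i = 0" by (simp add: xF_def)
  qed
  from ideal_add[OF I g(1) this]
  have "(\<lambda>i. g i + (xF {i. m i \<noteq> 0} i - g i)) \<in> I" .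
  moreover have "(\<lambda>i. g i + (xF {i. m i \<noteq> 0} i - g i)) = xF {i. m i \<noteq> 0}"
    using le by (simp add: fun_eq_iff)
  ultimately show "xF {i. m i \<noteq> 0} \<in> I" by simp
next
  assume h: "xF {i. m i \<noteq> 0} \<in> I"
  have le: "xF {i. m i \<noteq> 0} i \<le> m i" for i unfolding xF_def by auto
  have "(\<lambda>i. m i - xF {i. m i \<noteq> 0} i) \<in> smonos n"
    unfolding smonos_def
  proof (intro CollectI allI impI)
    fix i assume "n \<le> i"
    then have "m i = 0" using m unfolding smonos_def by blast
    then show "m i - xF {i. m i \<noteq> 0} i = 0" by simp
  qed
  from ideal_add[OF I h this]
  have "(\<lambda>i. xF {i. m i \<noteq> 0} i + (m i - xF {i. m i \<noteq> 0} i)) \<in> I" .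
  moreover have "(\<lambda>i. xF {i. m i \<noteq> 0} i + (m i - xF {i. m i \<noteq> 0} i)) = m"
    using le by (simp add: fun_eq_iff)
  ultimately show "m \<in> I" by simp
qed

lemma cone_xF: "m \<in> cone (xF F) F \<longleftrightarrow> {i. m i \<noteq> 0} = F"
proof -
  have "{i. xF F i \<noteq> 0} \<subseteq> F" unfolding xF_def by auto
  from cone_char[OF this] have "m \<in> cone (xF F) F \<longleftrightarrow> (\<forall>i. xF F i \<le> m i) \<and> (\<forall>i. i \<notin> F \<longrightarrow> m i = 0)" .
  also have "\<dots> \<longleftrightarrow> {i. m i \<noteq> 0} = F"
  proof
    assume h: "(\<forall>i. xF F i \<le> m i) \<and> (\<forall>i. i \<notin> F \<longrightarrow> m i = 0)"
    show "{i. m i \<noteq> 0} = F"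
    proof (intro set_eqI iffI)
      fix i assume "i \<in> {i. m i \<noteq> 0}" then show "i \<in> F" using h by auto
    next
      fix i assume i: "i \<in> F"
      have "xF F i \<le> m i" using h by blast
      then have "1 \<le> m i" using i by (simp add: xF_def)
      then show "i \<in> {i. m i \<noteq> 0}" by auto
    qed
  next
    assume h: "{i. m i \<noteq> 0} = F"
    show "(\<forall>i. xF F i \<le> m i) \<and> (\<forall>i. i \<notin> F \<longrightarrow> m i = 0)"
      using h unfolding xF_def by auto
  qed
  finally show ?thesis .
qed

lemma good_exists:
  assumes B: "B \<subseteq> smonos n"
    and cl: "\<And>m. m \<in> smonos n \<Longrightarrow> m \<in> B \<longleftrightarrow> xF {i. m i \<noteq> 0} \<in> B"
  shows "good n B n"
proof -
  define D where "D = (\<lambda>F. (xF F, F)) ` {F. F \<subseteq> {..<n} \<and> xF F \<in> B}"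
  have sd: "stanley_decomp n B D"
    unfolding stanley_decomp_def
  proof (intro conjI)
    have "{F. F \<subseteq> {..<n} \<and> xF F \<in> B} \<subseteq> Pow {..<n}" by auto
    then show "finite D" unfolding D_def by (meson finite_Pow_iff finite_imageI finite_lessThan finite_subset)
  next
    show "\<forall>(u, Z)\<in>D. u \<in> smonos n \<and> sqfree u \<and> Z \<subseteq> {..<n} \<and> {i. u i \<noteq> 0} \<subseteq> Z \<and> cone u Z \<subseteq> B"
    proof clarify
      fix u Z assume uZ: "(u, Z) \<in> D"
      then obtain F where ue: "u = xF F" "Z = F" and F: "F \<subseteq> {..<n}" "xF F \<in> B"
        unfolding D_def by blast
      have "cone (xF F) F \<subseteq> B"
      proof
        fix m assume "m \<in> cone (xF F) F"
        then have e: "{i. m i \<noteq> 0} = F" by (rule cone_xF[THEN iffD1])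
        have ms: "m \<in> smonos n" unfolding smonos_def
        proof (intro CollectI allI impI)
          fix i assume "n \<le> i"
          then have "i \<notin> F" using F(1) by auto
          then have "i \<notin> {i. m i \<noteq> 0}" using e by simp
          then show "m i = 0" by simp
        qed
        have "xF {i. m i \<noteq> 0} \<in> B" using e F(2) by simp
        then show "m \<in> B" using cl[OF ms] by blast
      qed
      moreover have "xF F \<in> smonos n" using F(1) unfolding smonos_def xF_def by auto
      moreover have "sqfree (xF F)" unfolding sqfree_def xF_def by auto
      moreover have "{i. xF F i \<noteq> 0} \<subseteq> F" unfolding xF_def by auto
      ultimately show "u \<in> smonos n \<and> sqfree u \<and> Z \<subseteq> {..<n} \<and> {i. u i \<noteq> 0} \<subseteq> Z \<and> cone u Z \<subseteq> B"
        using F(1) unfolding ue by blast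
    qed
  next
    show "\<forall>p\<in>D. \<forall>q\<in>D. p \<noteq> q \<longrightarrow> cone (fst p) (snd p) \<inter> cone (fst q) (snd q) = {}"
    proof (intro ballI impI)
      fix p q assume p: "p \<in> D" and q: "q \<in> D" and pq: "p \<noteq> q"
      obtain F where pF: "p = (xF F, F)" using p unfolding D_def by blast
      obtain G where qG: "q = (xF G, G)" using q unfolding D_def by blast
      have FG: "F \<noteq> G" using pq pF qG by blast
      show "cone (fst p) (snd p) \<inter> cone (fst q) (snd q) = {}"
      proof (rule ccontr)
        assume "cone (fst p) (snd p) \<inter> cone (fst q) (snd q) \<noteq> {}"
        then obtain m where "m \<in> cone (xF F) F" "m \<in> cone (xF G) G" using pF qG by auto
        then have "{i. m i \<noteq> 0} = F" "{i. m i \<noteq> 0} = G" by (simp_all only: cone_xF)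
        then show False using FG by simp
      qed
    qed
  next
    show "(\<Union>(u, Z)\<in>D. cone u Z) = B"
    proof
      show "(\<Union>(u, Z)\<in>D. cone u Z) \<subseteq> B"
      proof
        fix m assume "m \<in> (\<Union>(u, Z)\<in>D. cone u Z)"
        then obtain u Z where uZ: "(u, Z) \<in> D" "m \<in> cone u Z" by blast
        then obtain F where ue: "u = xF F" "Z = F" and F0: "F \<subseteq> {..<n}" "xF F \<in> B"
          unfolding D_def by blast
        have F: "F \<subseteq> {..<n}" "xF F \<in> B" "m \<in> cone (xF F) F" using F0 uZ(2) ue by auto
        have e: "{i. m i \<noteq> 0} = F" using F(3) by (rule cone_xF[THEN iffD1])
        have ms: "m \<in> smonos n" unfolding smonos_def
        proof (intro CollectI allI impI)
          fix i assume "n \<le> i"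
          then have "i \<notin> F" using F(1) by auto
          then have "i \<notin> {i. m i \<noteq> 0}" using e by simp
          then show "m i = 0" by simp
        qed
        have "xF {i. m i \<noteq> 0} \<in> B" using e F(2) by simp
        then show "m \<in> B" using cl[OF ms] by blast
      qed
    next
      show "B \<subseteq> (\<Union>(u, Z)\<in>D. cone u Z)"
      proof
        fix m assume m: "m \<in> B"
        have ms: "m \<in> smonos n" using B m by (rule subsetD)
        have "{i. m i \<noteq> 0} \<subseteq> {..<n}"
        proof
          fix i assume "i \<in> {i. m i \<noteq> 0}"
          then have mi: "m i \<noteq> 0" by (rule CollectD)
          show "i \<in> {..<n}"
          proof (rule ccontr)
            assume "i \<notin> {..<n}"
            then have "n \<le> i" by simp
            then have "m i = 0" using ms unfolding smonos_def by blast
            then show False using mi by simp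
          qed
        qed
        moreover have "xF {i. m i \<noteq> 0} \<in> B" using cl[OF ms] m by blast
        moreover have "m \<in> cone (xF {i. m i \<noteq> 0}) {i. m i \<noteq> 0}" by (simp only: cone_xF)
        ultimately show "m \<in> (\<Union>(u, Z)\<in>D. cone u Z)" unfolding D_def by blast
      qed
    qed
  qed
  have "\<forall>(u, Z)\<in>D. mdeg n u \<le> n"
  proof clarify
    fix u Z assume "(u, Z) \<in> D"
    then obtain F where ue: "u = xF F" unfolding D_def by blast
    have "mdeg n (xF F) \<le> (\<Sum>i<n. 1)" unfolding mdeg_def xF_def by (rule sum_mono) auto
    then show "mdeg n u \<le> n" using ue by simp
  qed
  then show ?thesis using sd unfolding good_def by blast
qed

lemma good_sreg:
  assumes "good n B d"
  shows "good n B (sreg n B)"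
proof -
  have "d \<in> {d. good n B d}" using assms by (simp only: mem_Collect_eq)
  then have "{d. good n B d} \<noteq> {}" by blast
  then have "Inf {d. good n B d} \<in> {d. good n B d}" by (rule Inf_nat_def1)
  then have g: "good n B (Inf {d. good n B d})" by (simp only: mem_Collect_eq)
  have "sreg n B = Inf {d. good n B d}" unfolding sreg_def good_def by (rule refl)
  then show ?thesis using g by (simp only:)
qed

lemma sreg_le:
  assumes "good n B d"
  shows "sreg n B \<le> d"
proof -
  have "d \<in> {d. \<exists>D. stanley_decomp n B D \<and> (\<forall>(u, Z)\<in>D. mdeg n u \<le> d)}"
    using assms unfolding good_def by (simp only: mem_Collect_eq)
  then show ?thesis unfolding sreg_def by (rule wellorder_Inf_le1)
qed

theorem lemma5p2:
  fixes n s :: nat and I :: "nat \<Rightarrow> mono set"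
  assumes "\<forall>i<s. sqfree_monomial_ideal n (I i)"
  shows "sreg n (smonos n - (\<Union>i<s. I i)) \<le> (\<Sum>i<s. sreg n (smonos n - I i)) \<and>
         sreg n (smonos n \<inter> (\<Inter>i<s. I i)) \<le> (\<Sum>i<s. sreg n (I i))"
proof
  have "\<forall>i<s. good n (smonos n - I i) (sreg n (smonos n - I i))"
  proof (intro allI impI)
    fix i assume i: "i < s"
    have Ii: "sqfree_monomial_ideal n (I i)" using assms i by blast
    have "good n (smonos n - I i) n"
    proof (rule good_exists)
      fix m assume m: "m \<in> smonos n"
      have k: "m \<in> I i \<longleftrightarrow> xF {i. m i \<noteq> 0} \<in> I i" by (rule key[OF Ii m])
      show "m \<in> smonos n - I i \<longleftrightarrow> xF {i. m i \<noteq> 0} \<in> smonos n - I i"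
        using k xF_smonos[OF m] m by simp
    next
      show "smonos n - I i \<subseteq> smonos n" by blast
    qed
    then show "good n (smonos n - I i) (sreg n (smonos n - I i))" by (rule good_sreg)
  qed
  from good_family[OF this]
  have "good n (smonos n \<inter> (\<Inter>i<s. smonos n - I i)) (\<Sum>i<s. sreg n (smonos n - I i))" .
  moreover have "smonos n \<inter> (\<Inter>i<s. smonos n - I i) = smonos n - (\<Union>i<s. I i)" by blast
  ultimately have "good n (smonos n - (\<Union>i<s. I i)) (\<Sum>i<s. sreg n (smonos n - I i))"
    by (simp only:)
  then show "sreg n (smonos n - (\<Union>i<s. I i)) \<le> (\<Sum>i<s. sreg n (smonos n - I i))"
    by (rule sreg_le)
next
  have "\<forall>i<s. good n (I i) (sreg n (I i))"
  proof (intro allI impI)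
    fix i assume i: "i < s"
    have Ii: "sqfree_monomial_ideal n (I i)" using assms i by blast
    have "good n (I i) n"
    proof (rule good_exists)
      show "I i \<subseteq> smonos n" using Ii unfolding sqfree_monomial_ideal_def by blast
    next
      fix m assume m: "m \<in> smonos n"
      show "m \<in> I i \<longleftrightarrow> xF {i. m i \<noteq> 0} \<in> I i" using key[OF Ii m] .
    qed
    then show "good n (I i) (sreg n (I i))" by (rule good_sreg)
  qed
  from good_family[OF this] show "sreg n (smonos n \<inter> (\<Inter>i<s. I i)) \<le> (\<Sum>i<s. sreg n (I i))"
    by (rule sreg_le)
qed

end
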